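(* The sequence $a(n)=\sum_{k=0}^{\lfloor\frac{n-1}{2}\rfloor}(-1)^k e(n-1-k,k)$, $n\ge 0$ (with $a(0)=0$ as an empty sum), is periodic with period $12$, i.e. $a(n+12)=a(n)$ for all $n\ge0$, and its first twelve values $a(0),\dots,a(11)$ are $0,1,1,1,0,0,0,0,0,-1,-1,-1$.
   Context: $e(m,k)$ is the number of $k$-element subsets of $\{1,\dots,m\}$ whose sum of elements is even (the empty set counts as even). *)

theory Defs
  imports Main
begin

definition e :: "nat \<Rightarrow> nat \<Rightarrow> nat" where
  "e m k = card {S. S \<subseteq> {1..m} \<and> card S = k \<and> even (\<Sum>S)}"

definition a :: "nat \<Rightarrow> int" where
  "a n = (if n = 0 then 0
          else (\<Sum>k = 0..(n - 1) div 2. (-1) ^ k * int (e (n - 1 - k) k)))"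

end

theory Submission
  imports Defs
begin

definition cset :: "nat \<Rightarrow> nat \<Rightarrow> bool \<Rightarrow> nat set set" where
  "cset m k b = {S. S \<subseteq> {1..m} \<and> card S = k \<and> even (\<Sum>S) = b}"

definition cnt :: "nat \<Rightarrow> nat \<Rightarrow> bool \<Rightarrow> nat" where
  "cnt m k b = card (cset m k b)"

lemma e_cnt: "e m k = cnt m k True"
  by (simp add: e_def cnt_def cset_def)

lemma cset_finite: "finite (cset m k b)"
  by (rule finite_subset[of _ "Pow {1..m}"]) (auto simp: cset_def)

lemma cset_split:
  "cset (Suc m) (Suc k) b = cset m (Suc k) b \<union> insert (Suc m) ` cset m k (b = even (Suc m))"
proof (rule set_eqI, rule iffI)
  fix S assume "S \<in> cset (Suc m) (Suc k) b"
  hence S: "S \<subseteq> {1..Suc m}" "card S = Suc k" "even (\<Sum>S) = b" by (auto simp: cset_def)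
  have fS: "finite S" using S(1) finite_subset by blast
  show "S \<in> cset m (Suc k) b \<union> insert (Suc m) ` cset m k (b = even (Suc m))"
  proof (cases "Suc m \<in> S")
    case False
    hence "S \<subseteq> {1..m}" using S(1) by (auto simp: subset_iff le_Suc_eq)
    thus ?thesis using S by (auto simp: cset_def)
  next
    case True
    define T where "T = S - {Suc m}"
    have ST: "S = insert (Suc m) T" using True T_def by auto
    have nT: "Suc m \<notin> T" using T_def by auto
    have fT: "finite T" using fS T_def by auto
    have T1: "T \<subseteq> {1..m}" using S(1) T_def by (auto simp: subset_iff le_Suc_eq)
    have T2: "card T = k" using S(2) ST nT fT by simp
    have "\<Sum>S = Suc m + \<Sum>T" using ST nT fT by simp
    hence T3: "even (\<Sum>T) = (b = even (Suc m))" using S(3) by auto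
    have "T \<in> cset m k (b = even (Suc m))" using T1 T2 T3 by (simp add: cset_def)
    thus ?thesis using ST by blast
  qed
next
  fix S assume "S \<in> cset m (Suc k) b \<union> insert (Suc m) ` cset m k (b = even (Suc m))"
  thus "S \<in> cset (Suc m) (Suc k) b"
  proof
    assume "S \<in> cset m (Suc k) b"
    thus ?thesis by (auto simp: cset_def)
  next
    assume "S \<in> insert (Suc m) ` cset m k (b = even (Suc m))"
    then obtain T where ST: "S = insert (Suc m) T" and T: "T \<subseteq> {1..m}" "card T = k"
      "even (\<Sum>T) = (b = even (Suc m))" by (auto simp: cset_def)
    have fT: "finite T" using T(1) finite_subset by blast
    have nT: "Suc m \<notin> T" using T(1) by auto
    have "\<Sum>S = Suc m + \<Sum>T" using ST nT fT by simp
    hence "even (\<Sum>S) = b" using T(3) by auto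
    moreover have "card S = Suc k" using ST nT fT T(2) by simp
    moreover have "S \<subseteq> {1..Suc m}" using ST T(1) by auto
    ultimately show ?thesis by (simp add: cset_def)
  qed
qed

lemma cnt_Suc: "cnt (Suc m) (Suc k) b = cnt m (Suc k) b + cnt m k (b = even (Suc m))"
proof -
  have inj: "inj_on (insert (Suc m)) (cset m k (b = even (Suc m)))"
  proof (rule inj_onI)
    fix x y assume x: "x \<in> cset m k (b = even (Suc m))" and y: "y \<in> cset m k (b = even (Suc m))"
      and xy: "insert (Suc m) x = insert (Suc m) y"
    have "Suc m \<notin> x" "Suc m \<notin> y" using x y by (auto simp: cset_def)
    thus "x = y" using xy insert_ident by metis
  qed
  have disj: "cset m (Suc k) b \<inter> insert (Suc m) ` cset m k (b = even (Suc m)) = {}"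
    by (auto simp: cset_def)
  show ?thesis unfolding cnt_def cset_split
    using card_Un_disjoint[OF cset_finite finite_imageI[OF cset_finite] disj] card_image[OF inj]
    by simp
qed

lemma cnt_0: "cnt m 0 b = (if b then 1 else 0)"
proof -
  have "cset m 0 b = (if b then {{}} else {})"
    by (auto simp: cset_def card_eq_0_iff dest: finite_subset)
  thus ?thesis by (simp add: cnt_def)
qed

lemma cnt_big: "m < k \<Longrightarrow> cnt m k b = 0"
proof -
  assume mk: "m < k"
  have "cset m k b = {}"
  proof (rule ccontr)
    assume "cset m k b \<noteq> {}"
    then obtain S where "S \<subseteq> {1..m}" "card S = k" by (auto simp: cset_def)
    hence "k \<le> m" using card_mono[of "{1..m}" S] by simp
    thus False using mk by simp
  qed
  thus ?thesis by (simp add: cnt_def)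
qed

lemma cnt_sum: "cnt m k True + cnt m k False = m choose k"
proof -
  have "cset m k True \<union> cset m k False = {S. S \<subseteq> {1..m} \<and> card S = k}"
    by (auto simp: cset_def)
  moreover have "cset m k True \<inter> cset m k False = {}" by (auto simp: cset_def)
  ultimately have "cnt m k True + cnt m k False = card {S. S \<subseteq> {1..m} \<and> card S = k}"
    unfolding cnt_def by (metis card_Un_disjoint cset_finite)
  thus ?thesis using n_subsets[of "{1..m}" k] by simp
qed

definition d :: "nat \<Rightarrow> nat \<Rightarrow> int" where
  "d m k = int (cnt m k True) - int (cnt m k False)"

lemma d_Suc: "d (Suc m) (Suc k) = d m (Suc k) + (if even (Suc m) then d m k else - d m k)"
  unfolding d_def cnt_Suc by auto

lemma d_0: "d m 0 = 1" by (simp add: d_def cnt_0)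

lemma d_big: "m < k \<Longrightarrow> d m k = 0" by (simp add: d_def cnt_big)

lemma d2: "d (Suc (Suc m)) (Suc (Suc k)) = d m (Suc (Suc k)) - d m k"
  unfolding d_Suc by auto

lemma d2_1: "d (Suc (Suc m)) (Suc 0) = d m (Suc 0)"
  unfolding d_Suc d_0 by auto

lemma e_BD: "2 * int (e m k) = int (m choose k) + d m k"
  using cnt_sum[of m k] by (simp add: e_cnt d_def)

definition G :: "nat \<Rightarrow> int" where
  "G n = (\<Sum>k<Suc n. (-1)^k * d (n - k) k)"

definition B :: "nat \<Rightarrow> int" where
  "B n = (\<Sum>k<Suc n. (-1)^k * int ((n - k) choose k))"

lemma G_bound: "n < M \<Longrightarrow> G n = (\<Sum>k<M. (-1)^k * d (n - k) k)"
  unfolding G_def by (rule sum.mono_neutral_left) (auto simp: d_big)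

lemma B_bound: "n < M \<Longrightarrow> B n = (\<Sum>k<M. (-1)^k * int ((n - k) choose k))"
  unfolding B_def by (rule sum.mono_neutral_left) auto

lemma sum_shift2: "(\<Sum>k<Suc (Suc N). f k) = f 0 + f (Suc 0) + (\<Sum>j<N. f (Suc (Suc j)))"
  for f :: "nat \<Rightarrow> int"
  by (simp only: sum.lessThan_Suc_shift add.assoc)

lemma sum_shift1: "(\<Sum>k<Suc N. f k) = f 0 + (\<Sum>j<N. f (Suc j))"
  for f :: "nat \<Rightarrow> int"
  by (simp only: sum.lessThan_Suc_shift)

lemma G_rec: "G (n + 4) = G (n + 2) - G n"
proof -
  define F where "F = (\<lambda>k. (-1)^k * d (n + 4 - k) k)"
  define H where "H = (\<lambda>k. (-1)^k * d (n + 2 - k) k)"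
  define K where "K = (\<lambda>k. (-1)^k * d (n - k) k)"
  have h1: "G (n + 4) = sum F {..<Suc (Suc (n+3))}" unfolding F_def by (rule G_bound) simp
  have h2: "G (n + 2) = sum H {..<Suc (Suc (n+3))}" unfolding H_def by (rule G_bound) simp
  have h3: "G n = sum K {..<n+3}" unfolding K_def by (rule G_bound) simp
  have t0: "F 0 = H 0" by (simp add: F_def H_def d_0)
  have t1: "F (Suc 0) = H (Suc 0)" using d2_1[of "n+1"] by (simp add: F_def H_def numeral_eq_Suc)
  have t2: "F (Suc (Suc j)) = H (Suc (Suc j)) - K j" for j
  proof (cases "j \<le> n")
    case True
    hence "n + 2 - Suc (Suc j) = n - j" "n + 4 - Suc (Suc j) = Suc (Suc (n - j))" by simp_all
    thus ?thesis using d2[of "n - j" j] by (simp add: F_def H_def K_def right_diff_distrib[symmetric])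
  next
    case False
    thus ?thesis by (simp add: F_def H_def K_def d_big)
  qed
  have "G (n + 4) = F 0 + F (Suc 0) + (\<Sum>j<n+3. F (Suc (Suc j)))"
    unfolding h1 by (rule sum_shift2)
  also have "\<dots> = H 0 + H (Suc 0) + (\<Sum>j<n+3. H (Suc (Suc j))) - sum K {..<n+3}"
    using t0 t1 t2 by (simp add: sum_subtractf)
  also have "\<dots> = G (n + 2) - G n" by (simp only: h2 h3 sum_shift2)
  finally show ?thesis .
qed

lemma B_rec: "B (n + 2) = B (n + 1) - B n"
proof -
  define F where "F = (\<lambda>k. (-1)^k * int ((n + 2 - k) choose k))"
  define H where "H = (\<lambda>k. (-1)^k * int ((n + 1 - k) choose k))"
  define K where "K = (\<lambda>k. (-1)^k * int ((n - k) choose k))"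
  have h1: "B (n + 2) = sum F {..<Suc (n+2)}" unfolding F_def by (rule B_bound) simp
  have h2: "B (n + 1) = sum H {..<Suc (n+2)}" unfolding H_def by (rule B_bound) simp
  have h3: "B n = sum K {..<n+2}" unfolding K_def by (rule B_bound) simp
  have t0: "F 0 = H 0" by (simp add: F_def H_def)
  have t2: "F (Suc j) = H (Suc j) - K j" for j
  proof (cases "j \<le> n")
    case True
    hence "n + 1 - Suc j = n - j" "n + 2 - Suc j = Suc (n - j)" by simp_all
    thus ?thesis by (simp add: F_def H_def K_def algebra_simps)
  next
    case False
    thus ?thesis by (simp add: F_def H_def K_def)
  qed
  have "B (n + 2) = F 0 + (\<Sum>j<n+2. F (Suc j))"
    unfolding h1 by (rule sum_shift1)
  also have "\<dots> = H 0 + (\<Sum>j<n+2. H (Suc j)) - sum K {..<n+2}"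
    using t0 t2 by (simp add: sum_subtractf)
  also have "\<dots> = B (n + 1) - B n" by (simp only: h2 h3 sum_shift1)
  finally show ?thesis .
qed

lemma a_Suc: "2 * a (Suc n) = B n + G n"
proof -
  have "a (Suc n) = (\<Sum>k = 0..n div 2. (-1) ^ k * int (e (n - k) k))"
    by (simp add: a_def)
  also have "\<dots> = (\<Sum>k<Suc n. (-1) ^ k * int (e (n - k) k))"
    by (rule sum.mono_neutral_left) (auto simp: e_cnt cnt_big)
  finally have "2 * a (Suc n) = (\<Sum>k<Suc n. (-1) ^ k * (2 * int (e (n - k) k)))"
    by (simp add: sum_distrib_left algebra_simps)
  also have "\<dots> = B n + G n"
    unfolding e_BD B_def G_def by (simp add: algebra_simps sum.distrib)
  finally show ?thesis .
qed

lemma B6: "B (n + 6) = B n"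
proof -
  have h: "B (m + 3) = - B m" for m
    using B_rec[of m] B_rec[of "m+1"] by (simp add: numeral_eq_Suc)
  show ?thesis using h[of n] h[of "n+3"] by (simp add: numeral_eq_Suc)
qed

lemma G12: "G (n + 12) = G n"
proof -
  have h: "G (m + 6) = - G m" for m
    using G_rec[of m] G_rec[of "m+2"] by (simp add: numeral_eq_Suc)
  show ?thesis using h[of n] h[of "n+6"] by (simp add: numeral_eq_Suc)
qed

lemma B12: "B (n + 12) = B n"
  using B6[of n] B6[of "n+6"] by (simp add: add.assoc)

lemma Bvals: "B 0 = 1" "B 1 = 1" "B 2 = 0" "B 3 = -1" "B 4 = -1" "B 5 = 0"
  "B 6 = 1" "B 7 = 1" "B 8 = 0" "B 9 = -1" "B 10 = -1" "B 11 = 0"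
proof -
  show b0: "B 0 = 1" by (simp add: B_def)
  show b1: "B 1 = 1" by (simp add: B_def)
  have r: "B (n+2) = B (n+1) - B n" for n by (rule B_rec)
  show b2: "B 2 = 0" using r[of 0] b0 b1 by (simp add: numeral_eq_Suc)
  show b3: "B 3 = -1" using r[of 1] b1 b2 by (simp add: numeral_eq_Suc)
  show b4: "B 4 = -1" using r[of 2] b2 b3 by simp
  show b5: "B 5 = 0" using r[of 3] b3 b4 by simp
  show b6: "B 6 = 1" using r[of 4] b4 b5 by simp
  show b7: "B 7 = 1" using r[of 5] b5 b6 by simp
  show b8: "B 8 = 0" using r[of 6] b6 b7 by simp
  show b9: "B 9 = -1" using r[of 7] b7 b8 by simp
  show b10: "B 10 = -1" using r[of 8] b8 b9 by simp
  show b11: "B 11 = 0" using r[of 9] b9 b10 by simp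
qed

lemma Gvals: "G 0 = 1" "G 1 = 1" "G 2 = 2" "G 3 = 1" "G 4 = 1" "G 5 = 0"
  "G 6 = -1" "G 7 = -1" "G 8 = -2" "G 9 = -1" "G 10 = -1" "G 11 = 0"
proof -
  have d11: "d 1 1 = -1" using d_Suc[of 0 0] by (simp add: d_0 d_big)
  have d21: "d 2 1 = 0" using d2_1[of 0] by (simp add: d_big numeral_eq_Suc)
  show g0: "G 0 = 1" by (simp add: G_def d_0)
  show g1: "G 1 = 1" by (simp add: G_def d_0 d_big)
  show g2: "G 2 = 2" using d11 by (simp add: G_def d_0 d_big numeral_eq_Suc)
  show g3: "G 3 = 1" using d21 by (simp add: G_def d_0 d_big numeral_eq_Suc)
  have r: "G (n+4) = G (n+2) - G n" for n by (rule G_rec)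
  show g4: "G 4 = 1" using r[of 0] g0 g2 by (simp add: numeral_eq_Suc)
  show g5: "G 5 = 0" using r[of 1] g1 g3 by (simp add: numeral_eq_Suc)
  show g6: "G 6 = -1" using r[of 2] g2 g4 by simp
  show g7: "G 7 = -1" using r[of 3] g3 g5 by simp
  show g8: "G 8 = -2" using r[of 4] g4 g6 by simp
  show g9: "G 9 = -1" using r[of 5] g5 g7 by simp
  show g10: "G 10 = -1" using r[of 6] g6 g8 by simp
  show g11: "G 11 = 0" using r[of 7] g7 g9 by simp
qed

lemma aS: "a (Suc n) = (B n + G n) div 2"
  using a_Suc[of n] by simp

theorem proposition4p4:
  shows "(\<forall>n. a (n + 12) = a n) \<and>
         map a [0..<12] = [0, 1, 1, 1, 0, 0, 0, 0, 0, -1, -1, -1]"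
proof
  show "\<forall>n. a (n + 12) = a n"
  proof
    fix n show "a (n + 12) = a n"
    proof (cases n)
      case 0
      have "a 12 = a (Suc 11)" by simp
      also have "\<dots> = 0" unfolding aS using Bvals Gvals by simp
      finally show ?thesis using 0 by (simp add: a_def)
    next
      case (Suc m)
      have "a (n + 12) = a (Suc (m + 12))" using Suc by simp
      also have "\<dots> = a (Suc m)" unfolding aS B12 G12 ..
      finally show ?thesis using Suc by simp
    qed
  qed
next
  have e: "[0..<12] = [0,Suc 0,Suc 1,Suc 2,Suc 3,Suc 4,Suc 5,Suc 6,Suc 7,Suc 8,Suc 9,Suc 10]"
    by (simp add: upt_rec)
  show "map a [0..<12] = [0, 1, 1, 1, 0, 0, 0, 0, 0, -1, -1, -1]"
    unfolding e list.map aS using Bvals Gvals by (simp add: a_def)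
qed

end
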